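(* Consider an autonomous system $\dot{\bm z}=X(\bm z)$, $X:\mathbb{C}^n\to\mathbb{C}^n$, a non-trivial solution $\phi(t)$ of it, and $t_0$ such that $X_i(\phi(t_0))\neq 0$ for some index $i$. Write $A_0:=X(\phi(t_0))$, $X_i^0:=X_i(\phi(t_0))$, and for $j\ge 1$ let $A_j:=X^{(j)}(\phi(t_0))$ be the lexicographically ordered matrix of all order-$j$ partial derivatives of $X$ evaluated at $\phi(t_0)$ (an $n\times d_{n,j}$ matrix, $d_{n,j}=\binom{n+j-1}{n-1}$). Define the constant matrices $F_1:=\mathrm{Id}_n-\frac{1}{X_i^0}\left(A_0\odot \bm{e}_i^T\right)$ and, for $k\ge 2$, $F_{k}=-\frac{1}{X^0_i} \left[\sum_{j=0}^{k-2}\binom{k-1}{j}F_{j+1}\left(A_{k-j-1}\odot \mathrm{Id}_n^{\odot j}\right)\right] U_k$, where $U_k=\left[\sum_{j=0}^{k-1} \binom{k}{j+1} (-1)^{j} (\mathrm{Id}_n - F_1)^{\odot j} \odot \mathrm{Id}_n^{\odot k-1-j}\right]\odot \bm{e}_i^T = \left[\bigodot_{j=1}^{k-1}(\mathrm{Id}_n-\zeta_k^jF_1)\right]\odot \bm{e}_i^T$, with $\zeta_k=\exp(2\pi \mathrm{i}/k)$. Then for every $k\ge 1$, $F_k\left(A_0\odot \mathrm{Id}_n^{\odot k-1}\right) + \binom{k-1}{1} F_{k-1}\left(A_1\odot \mathrm{Id}_n^{\odot k-2}\right) + \dots + \binom{k-1}{k-2} F_{2}\left(A_{k-2}\odot \mathrm{Id}_n\right)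 + F_{1}A_{k-1} =0,$ i.e. the conjectured filter matrix $\Phi=\exp_\odot(\cdots\mid F_3\mid F_2\mid F_1)$ satisfies the admissibility (kernel) condition at $t=t_0$ for every order $k\ge1$.
   Context: Here $\odot$ denotes Bekbaev's symmetric product of matrices: a matrix in $\mathrm{Mat}^{i,j}_{n}$ is identified with a linear map $\mathrm{Sym}^j K^n\to\mathrm{Sym}^i K^n$ (a $d_{n,i}\times d_{n,j}$ matrix), and $A\odot B$ acts on symmetric monomials $\bm{e}_1^{\odot k_1}\cdots\bm{e}_n^{\odot k_n}$ by $\frac{1}{\binom{j_1+j_2}{j_1}}\sum_{\mathbf p}\binom{\mathbf k}{\mathbf p}A(\bm e^{\odot\mathbf p})\odot B(\bm e^{\odot(\mathbf k-\mathbf p)})$, behaving like multiplication of homogeneous polynomials; powers $^{\odot k}$ are built from it, and $\exp_\odot A=\sum_{i\ge0}\frac{1}{i!}A^{\odot i}$. $\bm e_i$ is the $i$-th canonical basis vector of $K^n$. The displayed identity is the condition that the lower block of the (conjectural) filter matrix, applied to the inverse fundamental matrix of the linearized higher variational system, yields admissible solutions of the dual (adjoint) variational system, i.e. jets of formal first integrals; the statement proves this condition only at the initial time $t_0$, the full conjecture remaining open. *)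

theory Defs
  imports "HOL-Analysis.Analysis"
begin

text \<open>Multi-indices over the finite index type 'n (the coordinates 1..n of C^n).
  A multi-index k encodes the symmetric monomial e_1^k_1 ... e_n^k_n.\<close>
type_synonym 'n mi = "'n \<Rightarrow> nat"

definition mdeg :: "'n::finite mi \<Rightarrow> nat" where
  "mdeg k = (\<Sum>l\<in>UNIV. k l)"

definition mzero :: "'n mi" where "mzero = (\<lambda>_. 0)"

definition munit :: "'n \<Rightarrow> 'n mi" where
  "munit i = (\<lambda>l. if l = i then 1 else 0)"

definition msubi :: "'n mi \<Rightarrow> 'n mi \<Rightarrow> 'n mi" where
  "msubi a b = (\<lambda>l. a l - b l)"

definition mbinom :: "'n::finite mi \<Rightarrow> 'n mi \<Rightarrow> nat" where
  "mbinom k p = (\<Prod>l\<in>UNIV. k l choose p l)"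

text \<open>A matrix in Mat^{i,j}_n (linear map Sym^j K^n -> Sym^i K^n), K = complex,
  given by its entries M r c = coefficient of e^r in M(e^c), with r of degree i,
  c of degree j. Degrees are passed explicitly to the operations.\<close>
type_synonym 'n smat = "'n mi \<Rightarrow> 'n mi \<Rightarrow> complex"

definition mzeromat :: "'n smat" where "mzeromat = (\<lambda>r c. 0)"

definition madd :: "'n smat \<Rightarrow> 'n smat \<Rightarrow> 'n smat" where
  "madd A B = (\<lambda>r c. A r c + B r c)"

definition mscale :: "complex \<Rightarrow> 'n smat \<Rightarrow> 'n smat" where
  "mscale a A = (\<lambda>r c. a * A r c)"

definition msum :: "'b set \<Rightarrow> ('b \<Rightarrow> 'n smat) \<Rightarrow> 'n smat" where
  "msum J M = (\<lambda>r c. \<Sum>j\<in>J. M j r c)"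

definition mmul :: "nat \<Rightarrow> 'n::finite smat \<Rightarrow> 'n smat \<Rightarrow> 'n smat" where
  "mmul d M N = (\<lambda>r c. \<Sum>m\<in>{m. mdeg m = d}. M r m * N m c)"

definition idm :: "'n::finite smat" where
  "idm = (\<lambda>r c. if r = c \<and> mdeg c = 1 then 1 else 0)"

definition unitm :: "'n smat" where
  "unitm = (\<lambda>r c. if r = mzero \<and> c = mzero then 1 else 0)"

definition erow :: "'n \<Rightarrow> 'n smat" where
  "erow i = (\<lambda>r c. if r = mzero \<and> c = munit i then 1 else 0)"

text \<open>Bekbaev's symmetric product A \<odot> B for A with input degree j1 and B with input
  degree j2: on e^c (|c| = j1+j2) it is
  1/binom(j1+j2,j1) * sum_p binom(c,p) A(e^p) \<odot> B(e^(c-p)),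
  where the product of symmetric vectors is multiplication of polynomials
  (e^q \<odot> e^s = e^(q+s)).\<close>
definition sprod :: "nat \<Rightarrow> nat \<Rightarrow> 'n::finite smat \<Rightarrow> 'n smat \<Rightarrow> 'n smat" where
  "sprod j1 j2 A B = (\<lambda>r c.
     if mdeg c = j1 + j2 then
       (\<Sum>p\<in>{p. p \<le> c \<and> mdeg p = j1}.
          of_nat (mbinom c p) * (\<Sum>q\<in>{q. q \<le> r}. A q p * B (msubi r q) (msubi c p)))
       / of_nat ((j1 + j2) choose j1)
     else 0)"

primrec spow :: "nat \<Rightarrow> nat \<Rightarrow> 'n::finite smat \<Rightarrow> 'n smat" where
  "spow j 0 A = unitm"
| "spow j (Suc k) A = sprod (k * j) j (spow j k A) A"

definition partial :: "'n \<Rightarrow> (complex^'n \<Rightarrow> complex) \<Rightarrow> complex^'n \<Rightarrow> complex" where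
  "partial l f = (\<lambda>z. deriv (\<lambda>w. f (z + (\<chi> m. if m = l then w else 0))) 0)"

primrec pd :: "nat \<Rightarrow> 'n mi \<Rightarrow> (complex^'n \<Rightarrow> complex) \<Rightarrow> complex^'n \<Rightarrow> complex" where
  "pd 0 k f = f"
| "pd (Suc d) k f = (let l = (SOME l. 0 < k l) in partial l (pd d (k(l := k l - 1)) f))"

definition pderiv :: "'n::finite mi \<Rightarrow> (complex^'n \<Rightarrow> complex) \<Rightarrow> complex^'n \<Rightarrow> complex" where
  "pderiv k f = pd (mdeg k) k f"

text \<open>X^{(j)}(z) as an element of Mat^{1,j}_n: column e^c (|c| = j) is
  (\<partial>^c X_1(z), ..., \<partial>^c X_n(z)). For j = 0 this is the column X(z).\<close>
definition derivmat :: "(complex^'n \<Rightarrow> complex^'n) \<Rightarrow> complex^'n \<Rightarrow> nat \<Rightarrow> 'n::finite smat" where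
  "derivmat X z j = (\<lambda>r c. if mdeg c = j then
      (\<Sum>l\<in>UNIV. if r = munit l then pderiv c (\<lambda>w. X w $ l) z else 0) else 0)"

end

theory Submission
  imports Defs
begin


lemma fin_le: "finite {q::'n::finite mi. q \<le> r}"
proof -
  have "{q::'n mi. q \<le> r} \<subseteq> PiE UNIV (\<lambda>l. {..r l})"
    by (auto simp: le_fun_def PiE_def extensional_def)
  moreover have "finite (PiE (UNIV::'n set) (\<lambda>l. {..r l}))"
    by (rule finite_PiE) auto
  ultimately show ?thesis by (rule finite_subset)
qed

lemma le_mdeg: "m l \<le> mdeg (m::'n::finite mi)"
  unfolding mdeg_def by (rule member_le_sum) auto

lemma fin_deg: "finite {m::'n::finite mi. mdeg m = d}"
proof -
  have "{m::'n mi. mdeg m = d} \<subseteq> {q. q \<le> (\<lambda>_. d)}"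
    using le_mdeg by (fastforce simp: le_fun_def)
  then show ?thesis using fin_le finite_subset by blast
qed

lemma fin_le_deg: "finite {p::'n::finite mi. p \<le> c \<and> mdeg p = d}"
  by (rule finite_subset[OF _ fin_le[of c]]) auto

lemma mdeg_upd: "mdeg (r(l:=v)) + r l = mdeg (r::'n::finite mi) + v"
proof -
  have a: "mdeg r = r l + (\<Sum>m\<in>UNIV-{l}. r m)"
    unfolding mdeg_def by (simp add: sum.remove)
  have b: "mdeg (r(l:=v)) = v + (\<Sum>m\<in>UNIV-{l}. r m)"
    unfolding mdeg_def by (subst sum.remove[of _ l]) (auto intro!: sum.cong)
  show ?thesis using a b by simp
qed

lemma mdeg_mzero[simp]: "mdeg (mzero::'n::finite mi) = 0"
  by (simp add: mdeg_def mzero_def)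

lemma mdeg_eq0: "mdeg (m::'n::finite mi) = 0 \<longleftrightarrow> m = mzero"
  by (auto simp: mdeg_def mzero_def fun_eq_iff)

lemma mdeg_munit[simp]: "mdeg (munit l::'n::finite mi) = 1"
  by (simp add: mdeg_def munit_def)

lemma msubi_le: "q \<le> r \<Longrightarrow> msubi r q = d \<longleftrightarrow> d \<le> r \<and> q = msubi r d"
  by (auto simp: msubi_def le_fun_def fun_eq_iff) (metis diff_diff_cancel diff_le_self)+

lemma sum_msubi: "(\<Sum>q\<in>{q. q \<le> (r::'n::finite mi)}. if msubi r q = d then f q else 0)
   = (if d \<le> r then f (msubi r d) else (0::complex))"
proof -
  have "(\<Sum>q\<in>{q. q \<le> r}. if msubi r q = d then f q else 0)
      = (\<Sum>q\<in>{q. q \<le> r}. if q = msubi r d then (if d \<le> r then f q else 0) else 0)"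
    by (rule sum.cong) (auto simp: msubi_le)
  also have "\<dots> = (if d \<le> r then f (msubi r d) else 0)"
  proof -
    have "msubi r d \<in> {q. q \<le> r}" by (auto simp: msubi_def le_fun_def)
    then show ?thesis using fin_le[of r] by (cases "d \<le> r") (simp_all add: sum.delta)
  qed
  finally show ?thesis .
qed


lemma le_mdeg_eq: "p \<le> q \<Longrightarrow> mdeg p = mdeg q \<Longrightarrow> p = (q::'n::finite mi)"
proof (rule ccontr)
  assume a: "p \<le> q" "mdeg p = mdeg q" "p \<noteq> q"
  then obtain l where "p l < q l" by (auto simp: le_fun_def fun_eq_iff intro: le_neq_trans)
  then have "mdeg p < mdeg q" unfolding mdeg_def
    using a(1) by (intro sum_strict_mono_ex1) (auto simp: le_fun_def)
  then show False using a by simp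
qed

lemma mbinom_zero[simp]: "mbinom c mzero = 1"
  by (simp add: mbinom_def mzero_def)

lemma msubi_zero[simp]: "msubi c mzero = c"
  by (simp add: msubi_def mzero_def)

lemma sprod0: "mdeg c = j \<Longrightarrow> sprod 0 j A B r (c::'n::finite mi) =
   (\<Sum>q\<in>{q. q \<le> r}. A q mzero * B (msubi r q) c)"
proof -
  assume c: "mdeg c = j"
  have "{p. p \<le> c \<and> mdeg p = 0} = {mzero::'n mi}"
    by (auto simp: mdeg_eq0 mzero_def le_fun_def)
  then show ?thesis using c by (simp add: sprod_def)
qed

definition jei :: "'n \<Rightarrow> nat \<Rightarrow> 'n mi" where
  "jei i j = (\<lambda>l. if l = i then j else 0)"

lemma mdeg_jei[simp]: "mdeg (jei i j :: 'n::finite mi) = j"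
  by (simp add: mdeg_def jei_def)

lemma mbinom_jei[simp]: "mbinom c (jei i j :: 'n::finite mi) = c i choose j"
proof -
  have "mbinom c (jei i j) = (\<Prod>l\<in>UNIV. if l = i then c i choose j else 1)"
    unfolding mbinom_def jei_def by (rule prod.cong) auto
  then show ?thesis by simp
qed

lemma jei_le[simp]: "jei i j \<le> c \<longleftrightarrow> j \<le> c i"
  by (auto simp: jei_def le_fun_def)

lemma sprod_jei:
  assumes "\<And>q p. p \<noteq> jei i j \<Longrightarrow> A q p = 0"
  shows "sprod j j2 A B r (c::'n::finite mi) = (if mdeg c = j + j2 then
     (if j \<le> c i then of_nat (c i choose j) *
        (\<Sum>q\<in>{q. q \<le> r}. A q (jei i j) * B (msubi r q) (msubi c (jei i j))) else 0)
       / of_nat ((j + j2) choose j) else 0)"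
proof -
  have "(\<Sum>p\<in>{p. p \<le> c \<and> mdeg p = j}.
          of_nat (mbinom c p) * (\<Sum>q\<in>{q. q \<le> r}. A q p * B (msubi r q) (msubi c p)))
     = (\<Sum>p\<in>{p. p \<le> c \<and> mdeg p = j}. if p = jei i j then
          of_nat (mbinom c p) * (\<Sum>q\<in>{q. q \<le> r}. A q p * B (msubi r q) (msubi c p)) else 0)"
    by (rule sum.cong) (auto simp: assms)
  also have "\<dots> = (if j \<le> c i then of_nat (c i choose j) *
        (\<Sum>q\<in>{q. q \<le> r}. A q (jei i j) * B (msubi r q) (msubi c (jei i j))) else 0)"
    using fin_le_deg[of c j] by (simp add: sum.delta)
  finally show ?thesis by (simp add: sprod_def)
qed

lemma choose_pred: "0 < n \<Longrightarrow> n choose (n - 1) = n"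
  using binomial_symmetric[of 1 n] by simp

lemma sprod_1:
  assumes c: "mdeg c = Suc j"
  shows "sprod j 1 A B r (c::'n::finite mi) =
    (\<Sum>l\<in>UNIV. if 0 < c l then of_nat (c l) *
        (\<Sum>q\<in>{q. q \<le> r}. A q (c(l := c l - 1)) * B (msubi r q) (munit l)) else 0)
     / of_nat (Suc j)"
proof -
  define h where "h = (\<lambda>l. c(l := c l - 1))"
  define g where "g = (\<lambda>p. of_nat (mbinom c p) *
     (\<Sum>q\<in>{q. q \<le> r}. A q p * B (msubi r q) (msubi c p)) :: complex)"
  have hdeg: "0 < c l \<Longrightarrow> mdeg (h l) = j" for l
    using mdeg_upd[of c l "c l - 1"] c by (simp add: h_def)
  have bij: "bij_betw h {l. 0 < c l} {p. p \<le> c \<and> mdeg p = j}"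
  proof (rule bij_betwI')
    fix x y assume "x \<in> {l. 0 < c l}" "y \<in> {l. 0 < c l}"
    then show "(h x = h y) = (x = y)"
      by (auto simp: h_def fun_eq_iff split: if_splits)
  next
    fix x assume "x \<in> {l. 0 < c l}"
    then show "h x \<in> {p. p \<le> c \<and> mdeg p = j}" using hdeg by (auto simp: h_def le_fun_def)
  next
    fix p assume p: "p \<in> {p. p \<le> c \<and> mdeg p = j}"
    then have "p \<noteq> c" using c by auto
    then obtain l where l: "p l < c l" using p by (auto simp: le_fun_def fun_eq_iff intro: le_neq_trans)
    then have "p \<le> h l" using p by (auto simp: h_def le_fun_def)
    then have "p = h l" using le_mdeg_eq[of p "h l"] hdeg[of l] l p by simp
    then show "\<exists>x\<in>{l. 0 < c l}. p = h x" using l by (intro bexI[of _ l]) auto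
  qed
  have "(\<Sum>p\<in>{p. p \<le> c \<and> mdeg p = j}. g p) = (\<Sum>l\<in>{l. 0 < c l}. g (h l))"
    using sum.reindex_bij_betw[OF bij, of g] by simp
  also have "\<dots> = (\<Sum>l\<in>UNIV. if 0 < c l then g (h l) else 0)"
    by (simp add: sum.inter_filter[symmetric])
  also have "\<dots> = (\<Sum>l\<in>UNIV. if 0 < c l then of_nat (c l) *
        (\<Sum>q\<in>{q. q \<le> r}. A q (c(l := c l - 1)) * B (msubi r q) (munit l)) else 0)"
  proof (rule sum.cong)
    fix l assume "l \<in> (UNIV::'n set)"
    show "(if 0 < c l then g (h l) else 0) = (if 0 < c l then of_nat (c l) *
        (\<Sum>q\<in>{q. q \<le> r}. A q (c(l := c l - 1)) * B (msubi r q) (munit l)) else 0)"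
    proof (cases "0 < c l")
      case True
      have m1: "mbinom c (h l) = c l"
      proof -
        have "mbinom c (h l) = (\<Prod>m\<in>UNIV. if m = l then c l else 1)"
          unfolding mbinom_def h_def
          by (rule prod.cong) (use True choose_pred[of "c l"] in \<open>auto simp: binomial_n_n\<close>)
        then show ?thesis by simp
      qed
      have m2: "msubi c (h l) = munit l"
        using True by (auto simp: msubi_def h_def munit_def fun_eq_iff)
      show ?thesis using True m1 m2 by (simp add: g_def h_def)
    qed simp
  qed simp
  finally show ?thesis using c by (simp add: sprod_def g_def)
qed



definition dl :: "'n mi \<Rightarrow> 'n mi \<Rightarrow> complex" where
  "dl c r = (if r = c then 1 else 0)"

definition ma :: "('n::finite \<Rightarrow> complex) \<Rightarrow> ('n mi \<Rightarrow> complex) \<Rightarrow> 'n mi \<Rightarrow> complex" where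
  "ma x u r = (\<Sum>l\<in>UNIV. if 0 < r l then x l * u (r(l := r l - 1)) else 0)"

definition dv :: "'n \<Rightarrow> ('n mi \<Rightarrow> complex) \<Rightarrow> 'n mi \<Rightarrow> complex" where
  "dv i u r = of_nat (Suc (r i)) * u (r(i := Suc (r i)))"

definition sh :: "'n mi \<Rightarrow> ('n mi \<Rightarrow> complex) \<Rightarrow> 'n mi \<Rightarrow> complex" where
  "sh d u r = (if d \<le> r then u (msubi r d) else 0)"

definition app :: "nat \<Rightarrow> 'n::finite smat \<Rightarrow> ('n mi \<Rightarrow> complex) \<Rightarrow> 'n mi \<Rightarrow> complex" where
  "app d M v r = (\<Sum>m\<in>{m. mdeg m = d}. M r m * v m)"

lemma sh_dl: "sh d (dl mzero) = dl d"
  by (auto simp: sh_def dl_def fun_eq_iff msubi_def mzero_def le_fun_def)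
     (metis diff_is_0_eq le_antisym)

lemma sh_ma: "sh d (ma (x::'n::finite \<Rightarrow> complex) u) = ma x (sh d u)"
proof (rule ext)
  fix r
  show "sh d (ma x u) r = ma x (sh d u) r"
  proof (cases "d \<le> r")
    case True
    have "sh d (ma x u) r = (\<Sum>l\<in>UNIV. if 0 < msubi r d l then x l * u ((msubi r d)(l := msubi r d l - 1)) else 0)"
      using True by (simp add: sh_def ma_def)
    also have "\<dots> = ma x (sh d u) r" unfolding sh_def ma_def
    proof (rule sum.cong)
      fix l :: 'n assume "l \<in> UNIV"
      show "(if 0 < msubi r d l then x l * u ((msubi r d)(l := msubi r d l - 1)) else 0) =
        (if 0 < r l then x l * (if d \<le> r(l := r l - 1) then u (msubi (r(l := r l - 1)) d) else 0) else 0)"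
      proof (cases "d l < r l")
        case True
        have "d \<le> r(l := r l - 1)" using \<open>d \<le> r\<close> True by (auto simp: le_fun_def)
        moreover have "(msubi r d)(l := msubi r d l - 1) = msubi (r(l := r l - 1)) d"
          by (auto simp: msubi_def fun_eq_iff)
        ultimately show ?thesis using True \<open>d \<le> r\<close> by (simp add: msubi_def)
      next
        case False
        then have "d l = r l" using \<open>d \<le> r\<close> by (metis le_fun_def nat_less_le)
        then have "\<not> (0 < r l \<and> d \<le> r(l := r l - 1))" by (auto simp: le_fun_def dest: spec[of _ l])
        then show ?thesis using \<open>d l = r l\<close> \<open>d \<le> r\<close> by (auto simp: msubi_def)
      qed
    qed simp
    finally show ?thesis .
  next
    case False
    have nl: "\<not> d \<le> r(l := r l - 1)" for l
    proof
      assume "d \<le> r(l := r l - 1)"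
      moreover have "r(l := r l - 1) \<le> r" by (auto simp: le_fun_def)
      ultimately have "d \<le> r" by (rule order_trans)
      with False show False by simp
    qed
    have "ma x (sh d u) r = 0" unfolding ma_def sh_def
      by (intro sum.neutral ballI) (simp add: nl[simplified])
    then show ?thesis using False by (simp add: sh_def)
  qed
qed

lemma sh_ma_pow: "sh d ((ma x ^^ j) (dl mzero)) = (ma x ^^ j) (dl d)"
  by (induction j) (simp_all add: sh_dl sh_ma)

lemma msubi_munit: "msubi r (munit l) = r(l := r l - 1)"
  by (auto simp: msubi_def munit_def fun_eq_iff)

lemma munit_le: "munit l \<le> r \<longleftrightarrow> 0 < r l"
  by (auto simp: munit_def le_fun_def)

lemma conv_ma: "(\<Sum>q\<in>{q. q \<le> r}. u q * (\<Sum>l\<in>UNIV. if msubi r q = munit l then x l else 0))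
   = ma x u (r::'n::finite mi)"
proof -
  have "(\<Sum>q\<in>{q. q \<le> r}. u q * (\<Sum>l\<in>UNIV. if msubi r q = munit l then x l else 0))
      = (\<Sum>l\<in>UNIV. \<Sum>q\<in>{q. q \<le> r}. if msubi r q = munit l then x l * u q else 0)"
  proof -
    have "(\<Sum>q\<in>{q. q \<le> r}. u q * (\<Sum>l\<in>UNIV. if msubi r q = munit l then x l else 0))
      = (\<Sum>q\<in>{q. q \<le> r}. \<Sum>l\<in>UNIV. if msubi r q = munit l then x l * u q else 0)"
      by (rule sum.cong) (auto simp: sum_distrib_left intro!: sum.cong)
    then show ?thesis by (simp add: sum.swap[of _ "{q. q \<le> r}"])
  qed
  also have "\<dots> = (\<Sum>l\<in>UNIV. if munit l \<le> r then x l * u (msubi r (munit l)) else 0)"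
    by (simp add: sum_msubi)
  also have "\<dots> = ma x u r" unfolding ma_def
    by (rule sum.cong) (auto simp: munit_le msubi_munit)
  finally show ?thesis .
qed

lemma av_ma: "(\<lambda>r. \<Sum>l\<in>UNIV. if r = munit l then x l else 0) = ma x (dl (mzero::'n::finite mi))"
proof (rule ext)
  fix r :: "'n mi"
  have "ma x (dl mzero) r = (\<Sum>l\<in>UNIV. if r = munit l then x l else 0)"
    unfolding ma_def dl_def
    by (rule sum.cong) (auto simp: munit_def mzero_def fun_eq_iff split: if_splits)
  then show "(\<Sum>l\<in>UNIV. if r = munit l then x l else 0) = ma x (dl mzero) r" by simp
qed

lemma ma_pow_expand:
  "mdeg r = d + j \<Longrightarrow> (ma x ^^ j) u r =
     (\<Sum>q\<in>{q. mdeg q = d}. u q * (ma x ^^ j) (dl q) (r::'n::finite mi))"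
proof (induction j arbitrary: r)
  case 0
  have "(\<Sum>q\<in>{q. mdeg q = d}. u q * (ma x ^^ 0) (dl q) r) = (\<Sum>q\<in>{q. mdeg q = d}. if q = r then u q else 0)"
    by (rule sum.cong) (auto simp: dl_def)
  then show ?case using sum.delta[OF fin_deg[of d], of r u] 0 by simp
next
  case (Suc j)
  have "(ma x ^^ Suc j) u r = (\<Sum>l\<in>UNIV. if 0 < r l then x l * (ma x ^^ j) u (r(l := r l - 1)) else 0)"
    by (simp add: ma_def)
  also have "\<dots> = (\<Sum>l\<in>UNIV. if 0 < r l then x l *
         (\<Sum>q\<in>{q. mdeg q = d}. u q * (ma x ^^ j) (dl q) (r(l := r l - 1))) else 0)"
  proof (rule sum.cong)
    fix l :: 'n
    show "(if 0 < r l then x l * (ma x ^^ j) u (r(l := r l - 1)) else 0) =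
          (if 0 < r l then x l * (\<Sum>q\<in>{q. mdeg q = d}. u q * (ma x ^^ j) (dl q) (r(l := r l - 1))) else 0)"
    proof (cases "0 < r l")
      case True
      then have md: "mdeg (r(l := r l - 1)) = d + j" using mdeg_upd[of r l "r l - 1"] Suc.prems by simp
      show ?thesis by (simp only: Suc.IH[OF md])
    qed simp
  qed simp
  also have "\<dots> = (\<Sum>l\<in>UNIV. \<Sum>q\<in>{q. mdeg q = d}. u q * (if 0 < r l then x l * (ma x ^^ j) (dl q) (r(l := r l - 1)) else 0))"
    by (rule sum.cong) (auto simp: sum_distrib_left mult.left_commute)
  also have "\<dots> = (\<Sum>q\<in>{q. mdeg q = d}. u q * (\<Sum>l\<in>UNIV. if 0 < r l then x l * (ma x ^^ j) (dl q) (r(l := r l - 1)) else 0))"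
    by (simp add: sum.swap[of _ UNIV] sum_distrib_left)
  also have "\<dots> = (\<Sum>q\<in>{q. mdeg q = d}. u q * (ma x ^^ Suc j) (dl q) r)"
    by (simp add: ma_def)
  finally show ?case .
qed

lemma num_id: "Suc m * (fact j * (Suc m + j choose j)) = (fact (Suc j) * (m + Suc j choose Suc j) :: nat)"
proof -
  have e0: "Suc j * (Suc (j + m) choose Suc j) = Suc m * (Suc (j + m) choose j)" by (rule Suc_times_binomial_add)
  have a: "Suc m + j = Suc (j + m)" "m + Suc j = Suc (j + m)" by simp_all
  have "fact (Suc j) * (m + Suc j choose Suc j) = fact j * (Suc j * (Suc (j+m) choose Suc j))"
    unfolding a fact_Suc of_nat_id by (simp only: mult_ac)
  also have "\<dots> = fact j * (Suc m * (Suc (j + m) choose j))" by (simp only: e0)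
  finally show ?thesis unfolding a by (simp only: mult_ac)
qed

lemma dv_pow: "(dv i ^^ j) u r = of_nat (fact j * ((r i + j) choose j)) * u (r(i := r i + j))"
proof (induction j arbitrary: r)
  case 0
  then show ?case by simp
next
  case (Suc j)
  have e: "Suc (r i) * (fact j * (Suc (r i) + j choose j)) = fact (Suc j) * (r i + Suc j choose Suc j)"
    by (rule num_id)
  have uu: "(r(i := Suc (r i)))(i := Suc (r i) + j) = r(i := Suc (r i) + j)" by simp
  have "(dv i ^^ Suc j) u r = of_nat (Suc (r i)) * (of_nat (fact j * ((Suc (r i) + j) choose j)) *
           u (r(i := Suc (r i) + j)))"
  proof -
    have "(dv i ^^ Suc j) u r = dv i ((dv i ^^ j) u) r" by simp
    also have "\<dots> = of_nat (Suc (r i)) * (dv i ^^ j) u (r(i := Suc (r i)))" by (simp only: dv_def)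
    also have "\<dots> = of_nat (Suc (r i)) * (of_nat (fact j * ((Suc (r i) + j) choose j)) *
           u (r(i := Suc (r i) + j)))"
      using Suc.IH[of "r(i := Suc (r i))"] by (simp only: uu fun_upd_same)
    finally show ?thesis .
  qed
  also have "\<dots> = of_nat (Suc (r i) * (fact j * ((Suc (r i) + j) choose j))) * u (r(i := r i + Suc j))"
    by (simp only: of_nat_mult mult.assoc add_Suc add_Suc_right)
  also have "\<dots> = of_nat (fact (Suc j) * (r i + Suc j choose Suc j)) * u (r(i := r i + Suc j))"
    by (simp only: e)
  finally show ?case .
qed

lemma dv_ma: "dv i (ma x u) r = ma x (dv i u) r + x i * u (r::'n::finite mi)"
proof -
  define f where "f = (\<lambda>l. if 0 < (r(i := Suc (r i))) l then x l * u ((r(i := Suc (r i)))(l := (r(i := Suc (r i))) l - 1)) else 0)"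
  define g where "g = (\<lambda>l. if 0 < r l then x l * (of_nat (Suc ((r(l := r l - 1)) i)) * u ((r(l := r l - 1))(i := Suc ((r(l := r l - 1)) i)))) else 0)"
  have L: "dv i (ma x u) r = of_nat (Suc (r i)) * (f i + (\<Sum>l\<in>UNIV-{i}. f l))"
    unfolding dv_def ma_def f_def by (subst sum.remove[of _ i]) auto
  have R: "ma x (dv i u) r = g i + (\<Sum>l\<in>UNIV-{i}. g l)"
    unfolding dv_def ma_def g_def by (subst sum.remove[of _ i]) auto
  have fi: "f i = x i * u r" by (simp add: f_def)
  have gi: "g i = of_nat (r i) * x i * u r"
  proof (cases "r i")
    case (Suc m)
    then have "(r(i := m))(i := Suc m) = r" by (auto simp: fun_eq_iff)
    then show ?thesis using Suc by (simp add: g_def)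
  qed (simp add: g_def)
  have fg: "of_nat (Suc (r i)) * f l = g l" if "l \<in> UNIV - {i}" for l
    using that by (auto simp: f_def g_def fun_upd_twist)
  have "of_nat (Suc (r i)) * (\<Sum>l\<in>UNIV-{i}. f l) = (\<Sum>l\<in>UNIV-{i}. g l)"
    by (subst sum_distrib_left) (rule sum.cong, simp, rule fg)
  then show ?thesis using L R fi gi by (simp add: algebra_simps)
qed

lemma dv_add: "dv i (\<lambda>r. f r + g r) = (\<lambda>r. dv i f r + dv i g r)"
  by (simp add: dv_def fun_eq_iff algebra_simps)

lemma dv_scale: "dv i (\<lambda>r. c * f r) = (\<lambda>r. c * dv i f r)"
  by (simp add: dv_def fun_eq_iff algebra_simps)

lemma dv_pow_ma: "(dv i ^^ Suc j) (ma x u) =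
   (\<lambda>r. ma x ((dv i ^^ Suc j) u) r + of_nat (Suc j) * x i * (dv i ^^ j) u (r::'n::finite mi))"
proof (induction j)
  case 0
  then show ?case by (simp add: fun_eq_iff dv_ma)
next
  case (Suc j)
  have "(dv i ^^ Suc (Suc j)) (ma x u) = dv i ((dv i ^^ Suc j) (ma x u))" by simp
  also have "\<dots> = dv i (\<lambda>r. ma x ((dv i ^^ Suc j) u) r + of_nat (Suc j) * x i * (dv i ^^ j) u r)"
    using Suc.IH by simp
  also have "\<dots> = (\<lambda>r. dv i (ma x ((dv i ^^ Suc j) u)) r + of_nat (Suc j) * x i * dv i ((dv i ^^ j) u) r)"
    by (simp add: dv_add) (simp add: dv_def algebra_simps)
  also have "\<dots> = (\<lambda>r. ma x ((dv i ^^ Suc (Suc j)) u) r + of_nat (Suc (Suc j)) * x i * (dv i ^^ Suc j) u r)"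
    by (simp add: dv_ma fun_eq_iff algebra_simps)
  finally show ?case .
qed



lemma sum_delta_le: "(\<Sum>q\<in>{q. q \<le> (r::'n::finite mi)}. if q = a then f q else 0) = (if a \<le> r then f a else (0::complex))"
  using fin_le[of r] by (simp add: sum.delta)

lemma idm_unit: "idm m (munit l) = (if m = munit l then 1 else 0)"
  by (simp add: idm_def)

lemma idpow: "spow 1 j idm = (\<lambda>r c. if r = c \<and> mdeg c = j then 1 else (0::complex))"
proof (induction j)
  case 0
  show ?case by (auto simp: fun_eq_iff unitm_def mdeg_eq0)
next
  case (Suc j)
  show ?case
  proof (rule ext, rule ext)
    fix r c :: "'a mi"
    show "spow 1 (Suc j) idm r c = (if r = c \<and> mdeg c = Suc j then 1 else 0)"
    proof (cases "mdeg c = Suc j")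
      case False
      then show ?thesis by (simp add: sprod_def)
    next
      case True
      have inner: "(\<Sum>q\<in>{q. q \<le> r}. (if q = c(l := c l - 1) \<and> mdeg (c(l := c l - 1)) = j then 1 else 0) *
              idm (msubi r q) (munit l)) = (if r = c then 1 else 0)" if "0 < c l" for l
      proof -
        have md: "mdeg (c(l := c l - 1)) = j" using mdeg_upd[of c l "c l - 1"] True that by simp
        have "(\<Sum>q\<in>{q. q \<le> r}. (if q = c(l := c l - 1) \<and> mdeg (c(l := c l - 1)) = j then 1 else 0) *
              idm (msubi r q) (munit l)) = (\<Sum>q\<in>{q. q \<le> r}. if q = c(l := c l - 1) then
                  (if msubi r q = munit l then 1 else 0) else 0)"
          by (rule sum.cong) (use md in \<open>auto simp: idm_unit\<close>)
        also have "\<dots> = (if c(l := c l - 1) \<le> r \<and> msubi r (c(l := c l - 1)) = munit l then 1 else 0)"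
          by (simp add: sum_delta_le)
        also have "\<dots> = (if r = c then 1 else 0)"
        proof -
          have "(c(l := c l - 1) \<le> r \<and> msubi r (c(l := c l - 1)) = munit l) \<longleftrightarrow> r = c"
          proof
            assume h: "c(l := c l - 1) \<le> r \<and> msubi r (c(l := c l - 1)) = munit l"
            show "r = c"
            proof (rule ext)
              fix m
              have a: "(c(l := c l - 1)) m \<le> r m" using h by (simp add: le_fun_def)
              have b: "r m - (c(l := c l - 1)) m = munit l m" using h by (metis msubi_def)
              show "r m = c m"
              proof (cases "m = l")
                case True
                then show ?thesis using a b that by (simp add: munit_def)
              next
                case False
                then show ?thesis using a b by (simp add: munit_def)
              qed
            qed
          next
            assume "r = c"
            then show "c(l := c l - 1) \<le> r \<and> msubi r (c(l := c l - 1)) = munit l"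
              using that by (auto simp: le_fun_def msubi_def munit_def fun_eq_iff)
          qed
          then show ?thesis by simp
        qed
        finally show ?thesis .
      qed
      have "spow 1 (Suc j) idm r c = sprod j 1 (spow 1 j idm) idm r c"
        by (simp only: spow.simps mult_1_right)
      also have "\<dots> = (\<Sum>l\<in>UNIV. if 0 < c l then of_nat (c l) *
        (\<Sum>q\<in>{q. q \<le> r}. spow 1 j idm q (c(l := c l - 1)) * idm (msubi r q) (munit l)) else 0)
         / of_nat (Suc j)" by (rule sprod_1[OF True])
      also have "\<dots> = (\<Sum>l\<in>UNIV. if 0 < c l then of_nat (c l) * (if r = c then 1 else 0) else 0) / of_nat (Suc j)"
        unfolding Suc.IH by (simp only: inner cong: if_cong)
      also have "\<dots> = (if r = c then (\<Sum>l\<in>UNIV. of_nat (c l)) / of_nat (Suc j) else 0)"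
      proof (cases "r = c")
        case True
        then show ?thesis by (auto intro!: sum.cong)
      next
        case False
        then show ?thesis by (simp cong: if_cong)
      qed
      also have "\<dots> = (if r = c then 1 else 0)"
      proof -
        have ne: "(1::complex) + of_nat j \<noteq> 0" using of_nat_neq_0[of j, where 'a=complex] by simp
        show ?thesis using True ne by (simp add: mdeg_def of_nat_sum[symmetric] del: of_nat_sum)
      qed
      finally show ?thesis using True by simp
    qed
  qed
qed


lemma derivmat0: "derivmat (X :: complex^'n::finite \<Rightarrow> complex^'n) z 0 = (\<lambda>r c. if c = mzero then ma (\<lambda>l. X z $ l) (dl mzero) r else 0)"
proof (intro ext)
  fix r c :: "'n::finite mi"
  show "derivmat X z 0 r c = (if c = mzero then ma (\<lambda>l. X z $ l) (dl mzero) r else 0)"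
  proof (cases "c = mzero")
    case True
    have "derivmat X z 0 r c = (\<Sum>l\<in>UNIV. if r = munit l then X z $ l else 0)"
      using True by (simp add: derivmat_def pderiv_def cong: if_cong)
    then show ?thesis using True fun_cong[OF av_ma[of "\<lambda>l. X z $ l"], of r] by simp
  next
    case False
    then show ?thesis by (simp add: derivmat_def mdeg_eq0)
  qed
qed

lemma mzero_le[simp]: "mzero \<le> r"
  by (simp add: mzero_def le_fun_def)

lemma Sform: "sprod 0 1 (\<lambda>r c. if c = mzero then ma x (dl mzero) r else 0) (erow i)
    = (\<lambda>r c. if c = munit i then ma x (dl (mzero::'n::finite mi)) r else 0)"
proof (intro ext)
  fix r c :: "'n mi"
  show "sprod 0 1 (\<lambda>r c. if c = mzero then ma x (dl mzero) r else 0) (erow i) r c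
      = (if c = munit i then ma x (dl mzero) r else 0)"
  proof (cases "mdeg c = 1")
    case True
    have "sprod 0 1 (\<lambda>r c. if c = mzero then ma x (dl mzero) r else 0) (erow i) r c
       = (\<Sum>q\<in>{q. q \<le> r}. ma x (dl mzero) q * erow i (msubi r q) c)"
      using True by (simp add: sprod0)
    also have "\<dots> = (\<Sum>q\<in>{q. q \<le> r}. if msubi r q = mzero then (if c = munit i then ma x (dl mzero) q else 0) else 0)"
      by (rule sum.cong) (auto simp: erow_def)
    also have "\<dots> = (if c = munit i then ma x (dl mzero) r else 0)"
      by (simp add: sum_msubi)
    finally show ?thesis .
  next
    case False
    then have "c \<noteq> munit i" by auto
    then show ?thesis using False by (simp add: sprod_def)
  qed
qed

lemma Gform:
  assumes "F1 = madd idm (mscale (- (1 / x i)) (sprod 0 1 (\<lambda>r c. if c = mzero then ma x (dl mzero) r else 0) (erow i)))"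
  shows "madd idm (mscale (-1) F1) = (\<lambda>r c. if c = munit i then ma x (dl (mzero::'n::finite mi)) r / x i else 0)"
  unfolding assms Sform by (auto simp: madd_def mscale_def fun_eq_iff)

lemma Gpow:
  assumes G: "G = (\<lambda>r c. if c = munit i then ma x (dl (mzero::'n::finite mi)) r / x i else 0)"
  shows "spow 1 j G = (\<lambda>r c. if c = jei i j then (ma x ^^ j) (dl mzero) r / x i ^ j else 0)"
proof (induction j)
  case 0
  have "jei i 0 = mzero" by (simp add: jei_def mzero_def fun_eq_iff)
  then show ?case by (simp add: fun_eq_iff unitm_def dl_def)
next
  case (Suc j)
  show ?case
  proof (intro ext)
    fix r c :: "'n mi"
    show "spow 1 (Suc j) G r c = (if c = jei i (Suc j) then (ma x ^^ Suc j) (dl mzero) r / x i ^ Suc j else 0)"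
    proof (cases "mdeg c = Suc j")
      case False
      then have "c \<noteq> jei i (Suc j)" by auto
      then show ?thesis using False by (simp add: sprod_def)
    next
      case True
      have conv: "(\<Sum>q\<in>{q. q \<le> r}. (ma x ^^ j) (dl mzero) q * ma x (dl mzero) (msubi r q))
          = (ma x ^^ Suc j) (dl mzero) r"
      proof -
        have av: "(\<Sum>l\<in>UNIV. if m = munit l then x l else 0) = ma x (dl mzero) m" for m
          using fun_cong[OF av_ma[of x], of m] by simp
        have "(\<Sum>q\<in>{q. q \<le> r}. (ma x ^^ j) (dl mzero) q * ma x (dl mzero) (msubi r q))
          = ma x ((ma x ^^ j) (dl mzero)) r"
          using conv_ma[of "(ma x ^^ j) (dl mzero)" r x] by (simp only: av)
        then show ?thesis by simp
      qed
      have "spow 1 (Suc j) G r c = sprod j 1 (spow 1 j G) G r c"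
        by (simp only: spow.simps mult_1_right)
      also have "\<dots> = (\<Sum>l\<in>UNIV. if 0 < c l then of_nat (c l) *
        (\<Sum>q\<in>{q. q \<le> r}. spow 1 j G q (c(l := c l - 1)) * G (msubi r q) (munit l)) else 0)
         / of_nat (Suc j)" by (rule sprod_1[OF True])
      also have "\<dots> = (\<Sum>l\<in>UNIV. if l = i then (if 0 < c i \<and> c(i := c i - 1) = jei i j then of_nat (c i) *
        ((ma x ^^ Suc j) (dl mzero) r / x i ^ Suc j) else 0) else 0) / of_nat (Suc j)"
      proof -
        have "(if 0 < c l then of_nat (c l) *
            (\<Sum>q\<in>{q. q \<le> r}. spow 1 j G q (c(l := c l - 1)) * G (msubi r q) (munit l)) else 0)
          = (if l = i then (if 0 < c i \<and> c(i := c i - 1) = jei i j then of_nat (c i) *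
            ((ma x ^^ Suc j) (dl mzero) r / x i ^ Suc j) else 0) else 0)" for l
        proof (cases "l = i")
          case True
          have inner: "(\<Sum>q\<in>{q. q \<le> r}. spow 1 j G q (c(i := c i - 1)) * G (msubi r q) (munit i))
             = (if c(i := c i - 1) = jei i j then (ma x ^^ Suc j) (dl mzero) r / x i ^ Suc j else 0)"
          proof (cases "c(i := c i - 1) = jei i j")
            case True
            have "(\<Sum>q\<in>{q. q \<le> r}. spow 1 j G q (c(i := c i - 1)) * G (msubi r q) (munit i))
               = (\<Sum>q\<in>{q. q \<le> r}. (ma x ^^ j) (dl mzero) q * ma x (dl mzero) (msubi r q) / x i ^ Suc j)"
              unfolding Suc.IH if_P[OF True] by (rule sum.cong) (simp_all add: G ac_simps)
            also have "\<dots> = (ma x ^^ Suc j) (dl mzero) r / x i ^ Suc j"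
              by (simp only: sum_divide_distrib[symmetric] conv)
            finally show ?thesis using True by simp
          next
            case False
            show ?thesis unfolding Suc.IH using False by simp
          qed
          show ?thesis unfolding True by (simp only: inner) simp
        next
          case False
          then have "munit l \<noteq> munit i" by (auto simp: munit_def fun_eq_iff dest: spec[of _ l])
          then show ?thesis using False by (simp add: G)
        qed
        then show ?thesis by simp
      qed
      also have "\<dots> = (if c = jei i (Suc j) then (ma x ^^ Suc j) (dl mzero) r / x i ^ Suc j else 0)"
      proof -
        have e: "(0 < c i \<and> c(i := c i - 1) = jei i j) \<longleftrightarrow> c = jei i (Suc j)"
        proof
          assume h: "0 < c i \<and> c(i := c i - 1) = jei i j"
          show "c = jei i (Suc j)"
          proof (rule ext)
            fix m
            have "(c(i := c i - 1)) m = jei i j m" using h by simp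
            then show "c m = jei i (Suc j) m" using h by (cases "m = i") (auto simp: jei_def)
          qed
        next
          assume "c = jei i (Suc j)"
          then show "0 < c i \<and> c(i := c i - 1) = jei i j" by (auto simp: jei_def fun_eq_iff)
        qed
        have n: "of_nat (Suc j) \<noteq> (0::complex)" by (rule of_nat_neq_0)
        show ?thesis unfolding e using n by (auto simp: jei_def)
      qed
      finally show ?thesis .
    qed
  qed
qed



lemma Pcol:
  assumes "mdeg c = K"
  shows "sprod 0 K (\<lambda>r c. if c = mzero then ma x (dl mzero) r else 0) (spow 1 K idm) m c = ma x (dl c) (m::'n::finite mi)"
proof -
  have "sprod 0 K (\<lambda>r c. if c = mzero then ma x (dl mzero) r else 0) (spow 1 K idm) m c
      = (\<Sum>q\<in>{q. q \<le> m}. ma x (dl mzero) q * spow 1 K idm (msubi m q) c)"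
    using assms by (simp add: sprod0)
  also have "\<dots> = (\<Sum>q\<in>{q. q \<le> m}. if msubi m q = c then ma x (dl mzero) q else 0)"
    unfolding idpow using assms by (intro sum.cong) auto
  also have "\<dots> = sh c (ma x (dl mzero)) m"
    by (simp add: sum_msubi sh_def)
  also have "\<dots> = ma x (dl c) m"
    by (simp add: sh_ma sh_dl)
  finally show ?thesis .
qed

lemma Pcol0:
  assumes "mdeg c \<noteq> K"
  shows "sprod 0 K A B m c = 0"
  using assms by (simp add: sprod_def)

lemma Uentry:
  assumes k: "1 \<le> k" and m: "mdeg m = k"
  shows "sprod (k - 1) 1 V (erow i) r (m::'n::finite mi) =
     (if 0 < m i then of_nat (m i) * V r (m(i := m i - 1)) else 0) / of_nat k"
proof -
  have m': "mdeg m = Suc (k - 1)" using k m by simp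
  have "sprod (k - 1) 1 V (erow i) r m = (\<Sum>l\<in>UNIV. if 0 < m l then of_nat (m l) *
        (\<Sum>q\<in>{q. q \<le> r}. V q (m(l := m l - 1)) * erow i (msubi r q) (munit l)) else 0)
     / of_nat (Suc (k - 1))" by (rule sprod_1[OF m'])
  also have "\<dots> = (\<Sum>l\<in>UNIV. if l = i then (if 0 < m i then of_nat (m i) * V r (m(i := m i - 1)) else 0) else 0)
     / of_nat (Suc (k - 1))"
  proof -
    have "(if 0 < m l then of_nat (m l) *
        (\<Sum>q\<in>{q. q \<le> r}. V q (m(l := m l - 1)) * erow i (msubi r q) (munit l)) else 0)
       = (if l = i then (if 0 < m i then of_nat (m i) * V r (m(i := m i - 1)) else 0) else 0)" for l
    proof (cases "l = i")
      case True
      have "(\<Sum>q\<in>{q. q \<le> r}. V q (m(l := m l - 1)) * erow i (msubi r q) (munit l))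
          = (\<Sum>q\<in>{q. q \<le> r}. if msubi r q = mzero then V q (m(l := m l - 1)) else 0)"
        using True by (intro sum.cong) (auto simp: erow_def)
      also have "\<dots> = V r (m(l := m l - 1))" by (simp add: sum_msubi)
      finally show ?thesis using True by simp
    next
      case False
      then have "munit l \<noteq> munit i" by (auto simp: munit_def fun_eq_iff dest: spec[of _ l])
      then have "(\<Sum>q\<in>{q. q \<le> r}. V q (m(l := m l - 1)) * erow i (msubi r q) (munit l)) = 0"
        by (intro sum.neutral) (auto simp: erow_def)
      then show ?thesis using False by simp
    qed
    then show ?thesis by simp
  qed
  also have "\<dots> = (if 0 < m i then of_nat (m i) * V r (m(i := m i - 1)) else 0) / of_nat k"
    using k by simp
  finally show ?thesis .
qed

lemma app_U:
  assumes k: "1 \<le> k"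
  shows "app k (sprod (k - 1) 1 V (erow i)) w r = app (k - 1) V (dv i w) (r::'n::finite mi) / of_nat k"
proof -
  have "app k (sprod (k - 1) 1 V (erow i)) w r =
     (\<Sum>m\<in>{m. mdeg m = k}. (if 0 < m i then of_nat (m i) * V r (m(i := m i - 1)) * w m else 0)) / of_nat k"
    unfolding app_def sum_divide_distrib
  proof (intro sum.cong refl)
    fix m :: "'n mi" assume "m \<in> {m. mdeg m = k}"
    then have "mdeg m = k" by simp
    from Uentry[OF k this, where V=V and r=r and i=i] show "sprod (k - 1) 1 V (erow i) r m * w m =
        (if 0 < m i then of_nat (m i) * V r (m(i := m i - 1)) * w m else 0) / of_nat k" by simp
  qed
  also have "(\<Sum>m\<in>{m. mdeg m = k}. (if 0 < m i then of_nat (m i) * V r (m(i := m i - 1)) * w m else 0))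
      = (\<Sum>m\<in>{m. mdeg m = k \<and> 0 < m i}. of_nat (m i) * V r (m(i := m i - 1)) * w m)"
  proof -
    have e: "{m. mdeg m = k \<and> 0 < m i} = {m \<in> {m. mdeg m = k}. 0 < m i}" by auto
    show ?thesis by (simp only: e sum.inter_filter[OF fin_deg])
  qed
  also have "\<dots> = (\<Sum>p\<in>{p. mdeg p = k - 1}. V r p * dv i w p)"
  proof (rule sum.reindex_bij_witness[where i = "\<lambda>p. p(i := Suc (p i))" and j = "\<lambda>m. m(i := m i - 1)"])
    fix a :: "'n mi" assume a: "a \<in> {m. mdeg m = k \<and> 0 < m i}"
    show "(a(i := a i - 1))(i := Suc ((a(i := a i - 1)) i)) = a" using a by auto
    show "a(i := a i - 1) \<in> {p. mdeg p = k - 1}"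
      using a mdeg_upd[of a i "a i - 1"] by auto
    show "V r (a(i := a i - 1)) * dv i w (a(i := a i - 1)) = of_nat (a i) * V r (a(i := a i - 1)) * w a"
    proof -
      have "Suc (a i - 1) = a i" using a by simp
      moreover have "(a(i := a i - 1))(i := a i) = a" by simp
      ultimately show ?thesis by (simp add: dv_def)
    qed
  next
    fix b :: "'n mi" assume b: "b \<in> {p. mdeg p = k - 1}"
    show "(b(i := Suc (b i)))(i := (b(i := Suc (b i))) i - 1) = b" by simp
    show "b(i := Suc (b i)) \<in> {m. mdeg m = k \<and> 0 < m i}"
      using b k mdeg_upd[of b i "Suc (b i)"] by auto
  qed
  finally show ?thesis by (simp add: app_def)
qed


lemma msubi_jei: "msubi p (jei i j) = p(i := p i - j)"
  by (auto simp: msubi_def jei_def fun_eq_iff)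

lemma Ventry:
  assumes G: "G = (\<lambda>r c. if c = munit i then ma x (dl (mzero::'n::finite mi)) r / x i else 0)"
  and p: "mdeg p = K" and j: "j \<le> K"
  shows "sprod j (K - j) (spow 1 j G) (spow 1 (K - j) idm) r p =
     (if j \<le> p i then of_nat (p i choose j) * ((ma x ^^ j) (dl (p(i := p i - j))) r / x i ^ j) else 0)
       / of_nat (K choose j)"
proof -
  have z: "\<And>q c. c \<noteq> jei i j \<Longrightarrow> spow 1 j G q c = 0" unfolding Gpow[OF G] by simp
  have pd: "mdeg p = j + (K - j)" using p j by simp
  have inner: "(\<Sum>q\<in>{q. q \<le> r}. spow 1 j G q (jei i j) * spow 1 (K - j) idm (msubi r q) (msubi p (jei i j)))
      = (ma x ^^ j) (dl (p(i := p i - j))) r / x i ^ j" if ji: "j \<le> p i"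
  proof -
    have md: "mdeg (p(i := p i - j)) = K - j" using mdeg_upd[of p i "p i - j"] p ji by simp
    have "(\<Sum>q\<in>{q. q \<le> r}. spow 1 j G q (jei i j) * spow 1 (K - j) idm (msubi r q) (msubi p (jei i j)))
       = (\<Sum>q\<in>{q. q \<le> r}. if msubi r q = p(i := p i - j) then (ma x ^^ j) (dl mzero) q / x i ^ j else 0)"
      unfolding Gpow[OF G] idpow msubi_jei using md by (intro sum.cong) auto
    also have "\<dots> = sh (p(i := p i - j)) ((ma x ^^ j) (dl mzero)) r / x i ^ j"
      by (simp add: sum_msubi sh_def)
    also have "\<dots> = (ma x ^^ j) (dl (p(i := p i - j))) r / x i ^ j"
      by (simp add: sh_ma_pow)
    finally show ?thesis .
  qed
  have "sprod j (K - j) (spow 1 j G) (spow 1 (K - j) idm) r p = (if mdeg p = j + (K - j) then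
     (if j \<le> p i then of_nat (p i choose j) *
        (\<Sum>q\<in>{q. q \<le> r}. spow 1 j G q (jei i j) * spow 1 (K - j) idm (msubi r q) (msubi p (jei i j))) else 0)
       / of_nat ((j + (K - j)) choose j) else 0)"
    by (rule sprod_jei) (rule z)
  then show ?thesis using pd p inner j by simp
qed

lemma Vterm:
  assumes G: "G = (\<lambda>r c. if c = munit i then ma x (dl (mzero::'n::finite mi)) r / x i else 0)"
  and r: "mdeg r = K" and j: "j \<le> K"
  shows "app K (sprod j (K - j) (spow 1 j G) (spow 1 (K - j) idm)) v r
     = (ma x ^^ j) ((dv i ^^ j) v) r / (x i ^ j * fact j * of_nat (K choose j))"
proof -
  define D where "D = x i ^ j * of_nat (K choose j)"
  have "app K (sprod j (K - j) (spow 1 j G) (spow 1 (K - j) idm)) v r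
     = (\<Sum>p\<in>{p. mdeg p = K}. if j \<le> p i then of_nat (p i choose j) * (ma x ^^ j) (dl (p(i := p i - j))) r * v p / D else 0)"
    unfolding app_def
  proof (intro sum.cong refl)
    fix p :: "'n mi" assume "p \<in> {p. mdeg p = K}"
    then have pK: "mdeg p = K" by simp
    show "sprod j (K - j) (spow 1 j G) (spow 1 (K - j) idm) r p * v p =
      (if j \<le> p i then of_nat (p i choose j) * (ma x ^^ j) (dl (p(i := p i - j))) r * v p / D else 0)"
      unfolding Ventry[OF G pK j] D_def by simp
  qed
  also have "\<dots> = (\<Sum>p\<in>{p. mdeg p = K \<and> j \<le> p i}. of_nat (p i choose j) * (ma x ^^ j) (dl (p(i := p i - j))) r * v p / D)"
  proof -
    have e: "{p. mdeg p = K \<and> j \<le> p i} = {p \<in> {p. mdeg p = K}. j \<le> p i}" by auto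
    show ?thesis by (simp only: e sum.inter_filter[OF fin_deg])
  qed
  also have "\<dots> = (\<Sum>q\<in>{q. mdeg q = K - j}. of_nat ((q i + j) choose j) * (ma x ^^ j) (dl q) r * v (q(i := q i + j)) / D)"
  proof (rule sum.reindex_bij_witness[where i = "\<lambda>q. q(i := q i + j)" and j = "\<lambda>p. p(i := p i - j)"])
    fix a :: "'n mi" assume a: "a \<in> {p. mdeg p = K \<and> j \<le> p i}"
    show "(a(i := a i - j))(i := (a(i := a i - j)) i + j) = a" using a by auto
    show "a(i := a i - j) \<in> {q. mdeg q = K - j}" using a mdeg_upd[of a i "a i - j"] by auto
    have "a i - j + j = a i" using a by simp
    then show "of_nat (((a(i := a i - j)) i + j) choose j) * (ma x ^^ j) (dl (a(i := a i - j))) r *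
        v ((a(i := a i - j))(i := (a(i := a i - j)) i + j)) / D =
       of_nat (a i choose j) * (ma x ^^ j) (dl (a(i := a i - j))) r * v a / D"
      by simp
  next
    fix b :: "'n mi" assume b: "b \<in> {q. mdeg q = K - j}"
    show "(b(i := b i + j))(i := (b(i := b i + j)) i - j) = b" by simp
    show "b(i := b i + j) \<in> {p. mdeg p = K \<and> j \<le> p i}"
      using b j mdeg_upd[of b i "b i + j"] by auto
  qed
  also have "\<dots> = (\<Sum>q\<in>{q. mdeg q = K - j}. (dv i ^^ j) v q * (ma x ^^ j) (dl q) r) / (fact j * D)"
    unfolding sum_divide_distrib
  proof (intro sum.cong refl)
    fix q :: "'n mi"
    have f: "fact j \<noteq> (0::complex)" by simp
    show "of_nat ((q i + j) choose j) * (ma x ^^ j) (dl q) r * v (q(i := q i + j)) / D =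
        (dv i ^^ j) v q * (ma x ^^ j) (dl q) r / (fact j * D)"
      unfolding dv_pow using f by (simp add: field_simps)
  qed
  also have "\<dots> = (ma x ^^ j) ((dv i ^^ j) v) r / (fact j * D)"
    using ma_pow_expand[of r "K - j" j x "(dv i ^^ j) v"] r j by simp
  finally show ?thesis by (simp add: D_def ac_simps)
qed



lemma app_msum: "app d (msum J f) v r = (\<Sum>j\<in>J. app d (f j) v r)"
  unfolding app_def msum_def by (simp add: sum_distrib_right sum.swap[of _ J])

lemma app_mscale: "app d (mscale a M) v r = a * app d M v r"
  unfolding app_def mscale_def by (simp add: sum_distrib_left mult.assoc)

lemma ma_lin: "ma x (\<lambda>r. f r + a * g r) = (\<lambda>r. ma x f r + a * ma x g (r::'n::finite mi))"
proof (rule ext)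
  fix r :: "'n mi"
  have "ma x (\<lambda>r. f r + a * g r) r = (\<Sum>l\<in>UNIV. (if 0 < r l then x l * f (r(l := r l - 1)) else 0)
        + a * (if 0 < r l then x l * g (r(l := r l - 1)) else 0))"
    unfolding ma_def by (intro sum.cong refl) (simp add: algebra_simps)
  also have "\<dots> = ma x f r + a * ma x g r"
    unfolding ma_def by (simp add: sum.distrib sum_distrib_left)
  finally show "ma x (\<lambda>r. f r + a * g r) r = ma x f r + a * ma x g r" .
qed

lemma ma_pow_lin: "(ma x ^^ j) (\<lambda>r. f r + a * g r) = (\<lambda>r. (ma x ^^ j) f r + a * (ma x ^^ j) g (r::'n::finite mi))"
  by (induction j) (simp_all add: ma_lin)

lemma ma_zero: "ma x (\<lambda>r. 0) = (\<lambda>r::'n::finite mi. 0)"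
  unfolding ma_def by (simp add: fun_eq_iff cong: if_cong)

lemma ma_pow_zero: "(ma x ^^ j) (\<lambda>r. 0) = (\<lambda>r::'n::finite mi. 0)"
  by (induction j) (simp_all add: ma_zero)

lemma dv_pow_dl_zero:
  assumes "mdeg c < k"
  shows "(dv i ^^ k) (dl c) = (\<lambda>r::'n::finite mi. 0)"
proof (rule ext)
  fix r :: "'n mi"
  have "c i \<le> mdeg c" by (rule le_mdeg)
  then have "r(i := r i + k) \<noteq> c" using assms by (auto simp: fun_eq_iff dest: spec[of _ i])
  then show "(dv i ^^ k) (dl c) r = 0" by (simp add: dv_pow dl_def)
qed


lemma term_eq:
  fixes M :: "nat \<Rightarrow> complex"
  assumes xi: "(\<xi>::complex) \<noteq> 0" and jk: "j < k"
  shows "of_nat (k choose (j+1)) * (-1)^j * ((M (Suc j) + of_nat (Suc j) * \<xi> * M j) / (\<xi> ^ j * fact j * of_nat ((k-1) choose j))) / of_nat k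
     = \<xi> * ((-1)^j / (fact j * \<xi> ^ j) * M j - (-1)^(Suc j) / (fact (Suc j) * \<xi> ^ (Suc j)) * M (Suc j))"
proof -
  obtain n where n: "k = Suc n" using jk by (cases k) auto
  have jn: "j \<le> n" using jk n by simp
  have num: "of_nat (Suc n) * of_nat (n choose j) = (of_nat (Suc n choose Suc j) * of_nat (Suc j) :: complex)"
    using Suc_times_binomial_eq[of n j] by (metis of_nat_mult)
  have B: "of_nat (n choose j) \<noteq> (0::complex)" using jn by simp
  have Q0: "Suc n choose Suc j \<noteq> 0" using jn by (simp add: binomial_eq_0_iff)
  have Q: "of_nat (Suc n choose Suc j) \<noteq> (0::complex)" using Q0 by (simp only: of_nat_eq_0_iff not_False_eq_True)
  have S: "of_nat (Suc j) \<noteq> (0::complex)" by (rule of_nat_neq_0)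
  have K: "of_nat (Suc n) \<noteq> (0::complex)" by (rule of_nat_neq_0)
  have F: "fact j \<noteq> (0::complex)" by simp
  define Qc where "Qc = (of_nat (Suc n choose Suc j) :: complex)"
  define Bc where "Bc = (of_nat (n choose j) :: complex)"
  define Kc where "Kc = (of_nat (Suc n) :: complex)"
  define Sc where "Sc = (of_nat (Suc j) :: complex)"
  have num': "Kc * Bc = Qc * Sc" using num by (simp add: Kc_def Bc_def Qc_def Sc_def)
  have fS: "fact (Suc j) = Sc * fact j" by (simp add: Sc_def)
  have "of_nat (k choose (j+1)) * (-1)^j * ((M (Suc j) + of_nat (Suc j) * \<xi> * M j) / (\<xi> ^ j * fact j * of_nat ((k-1) choose j))) / of_nat k
      = Qc * (-1)^j * ((M (Suc j) + Sc * \<xi> * M j) / (\<xi> ^ j * fact j * Bc)) / Kc"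
    by (simp add: n Qc_def Sc_def Bc_def Kc_def)
  also have "\<dots> = Qc * (-1)^j * (M (Suc j) + Sc * \<xi> * M j) / (\<xi> ^ j * fact j * (Kc * Bc))"
    by (simp add: field_simps)
  also have "\<dots> = Qc * (-1)^j * (M (Suc j) + Sc * \<xi> * M j) / (\<xi> ^ j * fact j * (Qc * Sc))"
    by (simp only: num')
  also have "\<dots> = \<xi> * ((-1)^j / (fact j * \<xi> ^ j) * M j - (-1)^(Suc j) / (fact (Suc j) * \<xi> ^ (Suc j)) * M (Suc j))"
    unfolding fS using xi Q S F unfolding Qc_def[symmetric] Sc_def[symmetric]
    by (simp add: field_simps)
  finally show ?thesis .
qed


lemma UP:
  assumes xi: "x i \<noteq> 0"
  and G: "G = (\<lambda>r c. if c = munit i then ma x (dl (mzero::'n::finite mi)) r / x i else 0)"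
  and k: "1 \<le> k" and c: "mdeg c = k - 1" and r: "mdeg r = k - 1"
  shows "app k (sprod (k - 1) 1 (msum {0..k-1} (\<lambda>j. mscale (of_nat (k choose (j + 1)) * (- 1) ^ j)
            (sprod j (k - 1 - j) (spow 1 j G) (spow 1 (k - 1 - j) idm)))) (erow i)) (ma x (dl c)) r
        = x i * dl c r"
proof -
  define M where "M j = (ma x ^^ j) ((dv i ^^ j) (dl c)) r" for j
  define t where "t j = (-1)^j / (fact j * x i ^ j) * M j" for j
  have e: "{0..k-1} = {..<k}" using k by auto
  have "app k (sprod (k - 1) 1 (msum {0..k-1} (\<lambda>j. mscale (of_nat (k choose (j + 1)) * (- 1) ^ j)
            (sprod j (k - 1 - j) (spow 1 j G) (spow 1 (k - 1 - j) idm)))) (erow i)) (ma x (dl c)) r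
     = (\<Sum>j\<in>{..<k}. of_nat (k choose (j + 1)) * (- 1) ^ j *
          app (k - 1) (sprod j (k - 1 - j) (spow 1 j G) (spow 1 (k - 1 - j) idm)) (dv i (ma x (dl c))) r) / of_nat k"
    unfolding app_U[OF k] app_msum app_mscale e ..
  also have "\<dots> = (\<Sum>j\<in>{..<k}. x i * (t j - t (Suc j)))"
  proof -
    have perj: "of_nat (k choose (j + 1)) * (- 1) ^ j *
          app (k - 1) (sprod j (k - 1 - j) (spow 1 j G) (spow 1 (k - 1 - j) idm)) (dv i (ma x (dl c))) r
        = x i * (t j - t (Suc j)) * of_nat k" if jk: "j < k" for j
    proof -
      have jK: "j \<le> k - 1" using jk by simp
      have a: "app (k - 1) (sprod j (k - 1 - j) (spow 1 j G) (spow 1 (k - 1 - j) idm)) (dv i (ma x (dl c))) r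
          = (ma x ^^ j) ((dv i ^^ j) (dv i (ma x (dl c)))) r / (x i ^ j * fact j * of_nat ((k - 1) choose j))"
        by (rule Vterm[OF G r jK])
      have b: "(dv i ^^ j) (dv i (ma x (dl c))) = (dv i ^^ Suc j) (ma x (dl c))"
        by (simp only: funpow_Suc_right comp_apply)
      have d: "(ma x ^^ j) ((dv i ^^ Suc j) (ma x (dl c))) r = M (Suc j) + of_nat (Suc j) * x i * M j"
        unfolding dv_pow_ma ma_pow_lin M_def by (simp only: funpow_Suc_right comp_apply)
      define A where "A = of_nat (k choose (j + 1)) * (- 1) ^ j *
          ((M (Suc j) + of_nat (Suc j) * x i * M j) / (x i ^ j * fact j * of_nat ((k - 1) choose j)))"
      have T: "A / of_nat k = x i * (t j - t (Suc j))"
        unfolding t_def A_def by (rule term_eq[OF xi jk])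
      have kn: "of_nat k \<noteq> (0::complex)" using k by simp
      have "A = A / of_nat k * of_nat k" using kn by simp
      also have "\<dots> = x i * (t j - t (Suc j)) * of_nat k" by (simp only: T)
      finally show ?thesis unfolding a b d A_def .
    qed
    have kn: "of_nat k \<noteq> (0::complex)" using k by simp
    have "(\<Sum>j\<in>{..<k}. of_nat (k choose (j + 1)) * (- 1) ^ j *
          app (k - 1) (sprod j (k - 1 - j) (spow 1 j G) (spow 1 (k - 1 - j) idm)) (dv i (ma x (dl c))) r)
       = (\<Sum>j\<in>{..<k}. x i * (t j - t (Suc j)) * of_nat k)"
      by (intro sum.cong refl) (rule perj, simp)
    also have "\<dots> = (\<Sum>j\<in>{..<k}. x i * (t j - t (Suc j))) * of_nat k"
      by (simp only: sum_distrib_right)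
    finally show ?thesis using kn by simp
  qed
  also have "\<dots> = x i * (t 0 - t k)"
    by (simp only: sum_distrib_left[symmetric] sum_lessThan_telescope')
  also have "\<dots> = x i * dl c r"
  proof -
    have "t k = 0" unfolding t_def M_def
      using dv_pow_dl_zero[of c k i] c k by (simp add: ma_pow_zero)
    moreover have "t 0 = dl c r" by (simp add: t_def M_def)
    ultimately show ?thesis by simp
  qed
  finally show ?thesis .
qed



lemma mmul_app: "mmul d M N r c = app d M (\<lambda>m. N m c) r"
  by (simp add: mmul_def app_def)

lemma assemble:
  assumes xi: "(\<xi>::complex) \<noteq> 0"
  and UPc: "\<And>m' c. mdeg m' = K \<Longrightarrow> mdeg c = K \<Longrightarrow> app (Suc K) U (\<lambda>m. P m c) m' = \<xi> * dl c m'"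
  and P0: "\<And>m c. mdeg c \<noteq> K \<Longrightarrow> P m c = 0"
  and W0: "\<And>r c. mdeg c \<noteq> K \<Longrightarrow> W r c = 0"
  shows "W r c + mmul (Suc K) (mscale (-(1/\<xi>)) (mmul K W U)) P r (c::'n::finite mi) = 0"
proof -
  have "mmul (Suc K) (mscale (-(1/\<xi>)) (mmul K W U)) P r c
      = (\<Sum>m\<in>{m. mdeg m = Suc K}. \<Sum>m'\<in>{m. mdeg m = K}. -(1/\<xi>) * (W r m' * (U m' m * P m c)))"
    unfolding mmul_def mscale_def by (simp add: sum_distrib_left sum_distrib_right mult.assoc)
  also have "\<dots> = -(1/\<xi>) * (\<Sum>m'\<in>{m. mdeg m = K}. W r m' * app (Suc K) U (\<lambda>m. P m c) m')"
    unfolding app_def by (simp add: sum.swap[of _ "{m. mdeg m = Suc K}"] sum_distrib_left)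
  also have "\<dots> = - W r c"
  proof (cases "mdeg c = K")
    case True
    have "(\<Sum>m'\<in>{m. mdeg m = K}. W r m' * app (Suc K) U (\<lambda>m. P m c) m')
        = (\<Sum>m'\<in>{m. mdeg m = K}. if m' = c then \<xi> * W r m' else 0)"
      by (intro sum.cong refl) (auto simp: UPc True dl_def)
    also have "\<dots> = \<xi> * W r c" by (subst sum.delta[OF fin_deg]) (simp add: True)
    finally show ?thesis using xi by simp
  next
    case False
    have "app (Suc K) U (\<lambda>m. P m c) m' = 0" for m' unfolding app_def by (simp add: P0[OF False])
    then show ?thesis using W0[OF False] by simp
  qed
  finally show ?thesis by simp
qed


lemma av_unit: "ma x (dl mzero) (munit i) = x (i::'n::finite)"
proof -
  have "ma x (dl mzero) (munit i) = (\<Sum>l\<in>UNIV. if munit i = munit l then x l else 0)"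
    using fun_cong[OF av_ma[of x], of "munit i"] by simp
  also have "\<dots> = (\<Sum>l\<in>UNIV. if l = i then x l else 0)"
    by (intro sum.cong refl) (auto simp: munit_def fun_eq_iff dest: spec[of _ i])
  finally show ?thesis by simp
qed

lemma av_deg: "mdeg r \<noteq> 1 \<Longrightarrow> ma x (dl mzero) (r::'n::finite mi) = 0"
proof -
  assume r: "mdeg r \<noteq> 1"
  have "ma x (dl mzero) r = (\<Sum>l\<in>UNIV. if r = munit l then x l else 0)"
    using fun_cong[OF av_ma[of x], of r] by simp
  also have "\<dots> = 0" using r by (intro sum.neutral) auto
  finally show ?thesis .
qed

lemma k1case:
  assumes xi: "x i \<noteq> 0"
  and A0: "A0 = (\<lambda>r c. if c = mzero then ma x (dl mzero) r else 0)"
  and F1': "F1 = madd idm (mscale (-(1/x i)) (sprod 0 1 A0 (erow i)))"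
  shows "mmul 1 F1 (sprod 0 0 A0 (spow 1 0 idm)) r (c::'n::finite mi) = 0"
proof (cases "mdeg c = 0")
  case True
  have col: "(\<lambda>m. sprod 0 0 A0 (spow 1 0 idm) m c) = ma x (dl c)"
    using Pcol[OF True, of x] unfolding A0 by simp
  have c0: "c = mzero" using True by (simp add: mdeg_eq0)
  have F1e: "F1 r m = idm r m - (if m = munit i then ma x (dl mzero) r else 0) / x i" for m
    unfolding F1' A0 Sform by (simp add: madd_def mscale_def)
  have "mmul 1 F1 (sprod 0 0 A0 (spow 1 0 idm)) r c = (\<Sum>m\<in>{m. mdeg m = 1}. F1 r m * ma x (dl mzero) m)"
    by (simp only: mmul_app col) (simp only: app_def c0)
  also have "\<dots> = (\<Sum>m\<in>{m. mdeg m = 1}. (if m = r then ma x (dl mzero) m else 0)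
        - (if m = munit i then ma x (dl mzero) r * ma x (dl mzero) m / x i else 0))"
    by (intro sum.cong refl) (auto simp: F1e idm_def algebra_simps)
  also have "\<dots> = (if mdeg r = 1 then ma x (dl mzero) r else 0) - ma x (dl mzero) r"
    by (simp add: sum_subtractf fin_deg sum.delta av_unit xi)
  also have "\<dots> = 0" using av_deg[of r x] by auto
  finally show ?thesis .
next
  case False
  have "sprod 0 0 A0 (spow 1 0 idm) m c = 0" for m using Pcol0[OF False] by simp
  then show ?thesis unfolding mmul_def by simp
qed

theorem mainTheorem2:
  fixes X :: "complex^'n::finite \<Rightarrow> complex^'n"
    and \<phi> :: "complex \<Rightarrow> complex^'n"
    and T :: "complex set"
    and t0 :: complex
    and i :: 'n
    and F :: "nat \<Rightarrow> 'n smat"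
  assumes T_open: "open T" and t0_in: "t0 \<in> T"
    and solution: "\<forall>t\<in>T. (\<phi> has_derivative (\<lambda>h. h *s X (\<phi> t))) (at t)"
    and nontrivial: "\<exists>t\<in>T. \<phi> t \<noteq> \<phi> t0"
    and Xi_nz: "X (\<phi> t0) $ i \<noteq> 0"
    and F1: "F 1 = madd idm (mscale (- (1 / X (\<phi> t0) $ i))
                     (sprod 0 1 (derivmat X (\<phi> t0) 0) (erow i)))"
    and Fk: "\<forall>k\<ge>2. F k = mscale (- (1 / X (\<phi> t0) $ i))
               (mmul (k - 1)
                 (msum {0..k-2} (\<lambda>j. mscale (of_nat ((k - 1) choose j))
                    (mmul (j + 1) (F (j + 1))
                       (sprod (k - j - 1) j (derivmat X (\<phi> t0) (k - j - 1)) (spow 1 j idm)))))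
                 (sprod (k - 1) 1
                   (msum {0..k-1} (\<lambda>j. mscale (of_nat (k choose (j + 1)) * (- 1) ^ j)
                      (sprod j (k - 1 - j) (spow 1 j (madd idm (mscale (- 1) (F 1))))
                                           (spow 1 (k - 1 - j) idm))))
                   (erow i)))"
  shows "\<forall>k\<ge>1. msum {0..k-1} (\<lambda>j. mscale (of_nat ((k - 1) choose j))
                 (mmul (j + 1) (F (j + 1))
                    (sprod (k - 1 - j) j (derivmat X (\<phi> t0) (k - 1 - j)) (spow 1 j idm))))
               = mzeromat"
proof -
  define x where "x = (\<lambda>l. X (\<phi> t0) $ l)"
  have xi: "x i \<noteq> 0" using Xi_nz by (simp add: x_def)
  have xe: "X (\<phi> t0) $ i = x i" by (simp add: x_def)
  have A0: "derivmat X (\<phi> t0) 0 = (\<lambda>r c. if c = mzero then ma x (dl mzero) r else 0)"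
    unfolding x_def by (rule derivmat0)
  have F1': "F 1 = madd idm (mscale (- (1 / x i)) (sprod 0 1 (\<lambda>r c. if c = mzero then ma x (dl mzero) r else 0) (erow i)))"
    using F1 unfolding A0 xe .
  have Gf: "madd idm (mscale (-1) (F 1)) = (\<lambda>r c. if c = munit i then ma x (dl mzero) r / x i else 0)"
    by (rule Gform[OF F1'])
  show ?thesis
  proof (intro allI impI)
    fix k :: nat assume k1: "k \<ge> 1"
    show "msum {0..k-1} (\<lambda>j. mscale (of_nat ((k - 1) choose j))
                 (mmul (j + 1) (F (j + 1))
                    (sprod (k - 1 - j) j (derivmat X (\<phi> t0) (k - 1 - j)) (spow 1 j idm))))
               = mzeromat"
    proof (cases "k = 1")
      case True
      have "msum {0..k-1} (\<lambda>j. mscale (of_nat ((k - 1) choose j))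
                 (mmul (j + 1) (F (j + 1))
                    (sprod (k - 1 - j) j (derivmat X (\<phi> t0) (k - 1 - j)) (spow 1 j idm))))
          = mmul 1 (F 1) (sprod 0 0 (derivmat X (\<phi> t0) 0) (spow 1 0 idm))"
        using True by (simp add: msum_def mscale_def)
      moreover have "mmul 1 (F 1) (sprod 0 0 (derivmat X (\<phi> t0) 0) (spow 1 0 idm)) r c = 0" for r c
        using k1case[OF xi A0 F1'[folded A0]] .
      ultimately show ?thesis by (simp add: mzeromat_def fun_eq_iff)
    next
      case False
      then have k2: "k \<ge> 2" using k1 by simp
      define K where "K = k - 1"
      have kK: "k = Suc K" using k1 by (simp add: K_def)
      define g where "g = (\<lambda>j. mscale (of_nat ((k - 1) choose j))
                 (mmul (j + 1) (F (j + 1))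
                    (sprod (k - 1 - j) j (derivmat X (\<phi> t0) (k - 1 - j)) (spow 1 j idm))))"
      define W where "W = msum {0..k-2} (\<lambda>j. mscale (of_nat ((k - 1) choose j))
                    (mmul (j + 1) (F (j + 1))
                       (sprod (k - j - 1) j (derivmat X (\<phi> t0) (k - j - 1)) (spow 1 j idm))))"
      define U where "U = sprod (k - 1) 1
                   (msum {0..k-1} (\<lambda>j. mscale (of_nat (k choose (j + 1)) * (- 1) ^ j)
                      (sprod j (k - 1 - j) (spow 1 j (madd idm (mscale (- 1) (F 1))))
                                           (spow 1 (k - 1 - j) idm))))
                   (erow i)"
      define P where "P = sprod 0 (k - 1) (derivmat X (\<phi> t0) 0) (spow 1 (k - 1) idm)"
      have Fk': "F k = mscale (- (1 / x i)) (mmul (k - 1) W U)"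
        unfolding W_def U_def xe[symmetric] using Fk k2 by blast
      have split: "msum {0..k-1} g r c = W r c + mmul k (F k) P r c" for r c
      proof -
        have ins: "{0..k-1} = insert (k-1) {0..k-2}" using k2 by auto
        have nin: "k - 1 \<notin> {0..k-2}" using k2 by auto
        have "msum {0..k-1} g r c = g (k-1) r c + msum {0..k-2} g r c"
          unfolding msum_def ins using nin by simp
        moreover have "g (k-1) r c = mmul k (F k) P r c"
          unfolding g_def P_def mscale_def using k1 by simp
        moreover have "msum {0..k-2} g r c = W r c"
          unfolding msum_def W_def g_def
        proof (intro sum.cong refl)
          fix j assume "j \<in> {0..k-2}"
          have "k - 1 - j = k - j - 1" by simp
          then show "mscale (of_nat ((k - 1) choose j)) (mmul (j + 1) (F (j + 1))
                (sprod (k - 1 - j) j (derivmat X (\<phi> t0) (k - 1 - j)) (spow 1 j idm))) r c =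
              mscale (of_nat ((k - 1) choose j)) (mmul (j + 1) (F (j + 1))
                (sprod (k - j - 1) j (derivmat X (\<phi> t0) (k - j - 1)) (spow 1 j idm))) r c"
            by simp
        qed
        ultimately show ?thesis by simp
      qed
      have G: "(\<lambda>r c. if c = munit i then ma x (dl (mzero::'n mi)) r / x i else 0)
          = (\<lambda>r c. if c = munit i then ma x (dl (mzero::'n mi)) r / x i else 0)" ..
      have UPc: "app (Suc K) U (\<lambda>m. P m c) m' = x i * dl c m'" if m': "mdeg m' = K" and c: "mdeg c = K" for m' c
      proof -
        have col: "(\<lambda>m. P m c) = ma x (dl c)"
          unfolding P_def A0 using Pcol[of c "k - 1" x] c by (simp add: K_def)
        show ?thesis unfolding col U_def Gf kK[symmetric]
          using UP[OF xi G k1, of c m'] c m' by (simp add: K_def)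
      qed
      have P0: "P m c = 0" if "mdeg c \<noteq> K" for m c
        unfolding P_def using that by (simp add: K_def Pcol0)
      have W0: "W r c = 0" if c: "mdeg c \<noteq> K" for r c
      proof -
        have "sprod (k - j - 1) j A B m c = 0" if "j \<in> {0..k-2}" for j A B m
          using that c k2 by (simp add: sprod_def K_def)
        then show ?thesis unfolding W_def msum_def mscale_def mmul_def by simp
      qed
      have "W r c + mmul (Suc K) (mscale (-(1/x i)) (mmul K W U)) P r c = 0" for r c
        by (rule assemble[OF xi UPc P0 W0])
      note as = this
      have eqK: "Suc K = k" "K = k - 1" using kK by simp_all
      have "msum {0..k-1} g r c = 0" for r c
      proof -
        have "msum {0..k-1} g r c = W r c + mmul k (F k) P r c" by (rule split)
        also have "\<dots> = W r c + mmul (Suc K) (mscale (-(1/x i)) (mmul K W U)) P r c"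
        proof -
          have sk: "Suc (k - 1) = k" using k1 by simp
          show ?thesis by (simp only: Fk' eqK(2) sk)
        qed
        also have "\<dots> = 0" by (rule as)
        finally show ?thesis .
      qed
      then show ?thesis unfolding g_def[symmetric] by (simp add: mzeromat_def fun_eq_iff)
    qed
  qed
qed


end
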